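(* Let $\delta>0$ and $p\geq1$ be real numbers and let $u:\mathbb{R}\to\mathbb{R}$ be a $\delta$-step function. Then there exists a family $\{u_{\varepsilon}\}_{\varepsilon>0}\subseteq C^{\infty}_{c}(\mathbb{R})$ such that $u_{\varepsilon}\to u$ in $L^{p}(\mathbb{R})$ as $\varepsilon\to0^{+}$ and \[ \lim_{\varepsilon\to0^{+}}\Lambda_{\delta,p}(u_{\varepsilon},\mathbb{R})=\Lambda_{\delta,p}(u,\mathbb{R}). \]
   Context: A function $u:\mathbb{R}\to\mathbb{R}$ is a $\delta$-step function if there exist a positive integer $n$, real numbers $x_{0}<x_{1}<\dots<x_{n}$ and $(k_{1},\ldots,k_{n})\in\mathbb{Z}^{n}$ such that $u=0$ on $(-\infty,x_{0})\cup(x_{n},+\infty)$, $u=k_{i}\delta$ on $(x_{i-1},x_{i})$ for $i=1,\ldots,n$, $|k_{1}|=|k_{n}|=1$, and $|k_{i}-k_{i-1}|=1$ for $i=2,\ldots,n$ (values at the points $x_i$ are irrelevant). For measurable $v:\mathbb{R}\to\mathbb{R}$, $\Lambda_{\delta,p}(v,\mathbb{R}):=\iint_{\{(x,y)\in\mathbb{R}^{2}:|v(y)-v(x)|>\delta\}}\frac{\delta^{p}}{|y-x|^{1+p}}\,dx\,dy$. *)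

theory Defs
  imports "HOL-Analysis.Analysis"
begin

definition step_fun :: "real \<Rightarrow> (real \<Rightarrow> real) \<Rightarrow> bool" where
  "step_fun \<delta> u \<longleftrightarrow>
     (\<exists>(n::nat) (xs::nat \<Rightarrow> real) (k::nat \<Rightarrow> int).
        n \<ge> 1 \<and>
        (\<forall>i<n. xs i < xs (Suc i)) \<and>
        (\<forall>x. (x < xs 0 \<or> x > xs n) \<longrightarrow> u x = 0) \<and>
        (\<forall>i\<in>{1..n}. \<forall>x. xs (i - 1) < x \<and> x < xs i \<longrightarrow> u x = real_of_int (k i) * \<delta>) \<and>
        \<bar>k 1\<bar> = 1 \<and> \<bar>k n\<bar> = 1 \<and>
        (\<forall>i\<in>{2..n}. \<bar>k i - k (i - 1)\<bar> = 1))"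

definition Lambda :: "real \<Rightarrow> real \<Rightarrow> (real \<Rightarrow> real) \<Rightarrow> ennreal" where
  "Lambda \<delta> p v =
     (\<integral>\<^sup>+ z. indicator {z. \<bar>v (snd z) - v (fst z)\<bar> > \<delta>} z *
        ennreal (\<delta> powr p / \<bar>snd z - fst z\<bar> powr (1 + p)) \<partial>(lborel \<Otimes>\<^sub>M lborel))"

definition smooth_real :: "(real \<Rightarrow> real) \<Rightarrow> bool" where
  "smooth_real f \<longleftrightarrow> (\<forall>m x. ((deriv ^^ m) f) differentiable (at x))"

definition Cc_inf :: "(real \<Rightarrow> real) \<Rightarrow> bool" where
  "Cc_inf f \<longleftrightarrow> smooth_real f \<and> compact (closure {x. f x \<noteq> 0})"

end

theory Submission
  imports Defs "HOL-Computational_Algebra.Polynomial"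
begin


definition Ef :: "real poly \<Rightarrow> real \<Rightarrow> real" where
  "Ef q x = (if x > 0 then poly q (1/x) * exp (-(1/x)) else 0)"

definition Tp :: "real poly \<Rightarrow> real poly" where
  "Tp q = [:0,0,1:] * (q - pderiv q)"

lemma poly_div_exp_0: "((\<lambda>t. poly r t / exp t) \<longlongrightarrow> (0::real)) at_top"
proof -
  have "((\<lambda>t. \<Sum>i\<le>degree r. coeff r i * (t ^ i / exp t)) \<longlongrightarrow> (\<Sum>i\<le>degree r. coeff r i * 0)) at_top"
    by (intro tendsto_sum tendsto_mult tendsto_const tendsto_power_div_exp_0)
  moreover have "(\<lambda>t. \<Sum>i\<le>degree r. coeff r i * (t ^ i / exp t)) = (\<lambda>t. poly r t / exp t)"
    by (auto simp: poly_altdef sum_divide_distrib)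
  ultimately show ?thesis by simp
qed

lemma Ef_deriv_pos:
  assumes "x > 0"
  shows "(Ef q has_real_derivative Ef (Tp q) x) (at x)"
proof -
  have i: "((\<lambda>x. 1/x) has_real_derivative -(1/x^2)) (at x)"
    using DERIV_inverse[of x] assms by (simp add: inverse_eq_divide power2_eq_square)
  have a: "((\<lambda>x. poly q (1/x)) has_real_derivative poly (pderiv q) (1/x) * (-(1/x^2))) (at x)"
    by (rule DERIV_chain2[OF poly_DERIV i])
  have i2: "((\<lambda>x. -(1/x)) has_real_derivative (1/x^2)) (at x)"
    using DERIV_minus[OF i] by simp
  have b: "((\<lambda>x. exp (-(1/x))) has_real_derivative exp (-(1/x)) * (1/x^2)) (at x)"
    by (rule DERIV_chain2[OF DERIV_exp i2])
  have d: "((\<lambda>x. poly q (1/x) * exp (-(1/x))) has_real_derivative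
     (poly (pderiv q) (1/x) * (-(1/x^2)) * exp (-(1/x)) + poly q (1/x) * (exp (-(1/x)) * (1/x^2)))) (at x)"
    using DERIV_mult[OF a b] by (simp add: mult.commute)
  have e: "poly (pderiv q) (1/x) * (-(1/x^2)) * exp (-(1/x)) + poly q (1/x) * (exp (-(1/x)) * (1/x^2))
      = Ef (Tp q) x"
  proof -
    have "Ef (Tp q) x = (1/x)*(1/x) * (poly q (1/x) - poly (pderiv q) (1/x)) * exp (-(1/x))"
      using assms by (simp add: Ef_def Tp_def poly_mult)
    then show ?thesis by (simp add: power2_eq_square) argo
  qed
  show ?thesis
  proof (rule has_field_derivative_transform_within_open[where S="{0<..}"])
    show "((\<lambda>x. poly q (1/x) * exp (-(1/x))) has_real_derivative Ef (Tp q) x) (at x)"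
      using d unfolding e .
  qed (use assms in \<open>auto simp: Ef_def\<close>)
qed

lemma Ef_deriv_neg:
  assumes "x < 0"
  shows "(Ef q has_real_derivative Ef (Tp q) x) (at x)"
proof -
  have z: "Ef (Tp q) x = 0" using assms by (simp add: Ef_def)
  have d: "((\<lambda>x. 0) has_real_derivative Ef (Tp q) x) (at x)"
    unfolding z by simp
  show ?thesis
  proof (rule has_field_derivative_transform_within_open[OF d, where S="{..<0}"])
    show "open {..<(0::real)}" by simp
    show "x \<in> {..<0}" using assms by simp
    show "\<And>y. y \<in> {..<0} \<Longrightarrow> 0 = Ef q y" by (simp add: Ef_def)
  qed
qed

lemma Ef_nonpos: "y \<le> 0 \<Longrightarrow> Ef q y = 0" by (simp add: Ef_def)

lemma Ef_deriv_0:
  shows "(Ef q has_real_derivative Ef (Tp q) 0) (at 0)"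
proof -
  have z: "Ef (Tp q) 0 = 0" "Ef q 0 = 0" by (simp_all add: Ef_def)
  have lim: "((\<lambda>y. Ef q y / y) \<longlongrightarrow> 0) (at 0)"
  proof (rule filterlim_split_at)
    have "\<forall>\<^sub>F y in at_left (0::real). y < 0"
      unfolding eventually_at_left_field by (intro exI[of _ "-1"]) auto
    then have "\<forall>\<^sub>F y in at_left (0::real). Ef q y / y = 0"
      by (rule eventually_mono) (simp add: Ef_nonpos)
    then show "((\<lambda>y. Ef q y / y) \<longlongrightarrow> 0) (at_left 0)"
      by (rule tendsto_eventually)
    have "((\<lambda>t. poly ([:0,1:] * q) t / exp t) \<longlongrightarrow> 0) at_top" by (rule poly_div_exp_0)
    moreover have "eventually (\<lambda>t. poly ([:0,1:] * q) t / exp t = Ef q (inverse t) / inverse t) at_top"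
      using eventually_gt_at_top[of 0]
    proof eventually_elim
      case (elim t)
      then have "Ef q (inverse t) = poly q t * exp (-t)" by (simp add: Ef_def divide_inverse)
      then show ?case by (simp add: poly_mult exp_minus divide_inverse mult_ac)
    qed
    ultimately have inv: "((\<lambda>t. Ef q (inverse t) / inverse t) \<longlongrightarrow> 0) at_top"
      by (rule Lim_transform_eventually)
    show "((\<lambda>y. Ef q y / y) \<longlongrightarrow> 0) (at_right 0)"
      using filterlim_compose[OF inv filterlim_inverse_at_top_right] by simp
  qed
  show ?thesis unfolding has_field_derivative_iff z using lim by simp
qed

lemma Ef_deriv: "(Ef q has_real_derivative Ef (Tp q) x) (at x)"
  using Ef_deriv_pos Ef_deriv_neg Ef_deriv_0 by (cases x "0::real" rule: linorder_cases) auto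

coinductive_set Smo :: "(real \<Rightarrow> real) set" where
  "(\<forall>x. g differentiable (at x)) \<Longrightarrow> deriv g \<in> Smo \<Longrightarrow> g \<in> Smo"

lemma Smo_funpow: "g \<in> Smo \<Longrightarrow> (deriv ^^ m) g \<in> Smo"
  by (induction m) (auto elim: Smo.cases)

lemma Smo_smooth: "g \<in> Smo \<Longrightarrow> smooth_real g"
  unfolding smooth_real_def using Smo_funpow by (blast elim: Smo.cases)

inductive_set Alg :: "(real \<Rightarrow> real) set \<Rightarrow> (real \<Rightarrow> real) set" for B where
  base: "f \<in> B \<Longrightarrow> f \<in> Alg B"
| const: "(\<lambda>x. c) \<in> Alg B"
| add: "f \<in> Alg B \<Longrightarrow> g \<in> Alg B \<Longrightarrow> (\<lambda>x. f x + g x) \<in> Alg B"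
| mult: "f \<in> Alg B \<Longrightarrow> g \<in> Alg B \<Longrightarrow> (\<lambda>x. f x * g x) \<in> Alg B"

lemma Alg_derivs:
  assumes hB: "\<And>f. f \<in> B \<Longrightarrow> \<exists>f'. (\<forall>x. (f has_real_derivative f' x) (at x)) \<and> f' \<in> Alg B"
  shows "h \<in> Alg B \<Longrightarrow> \<exists>h'. (\<forall>x. (h has_real_derivative h' x) (at x)) \<and> h' \<in> Alg B"
proof (induction h rule: Alg.induct)
  case (base f) then show ?case using hB by blast
next
  case (const c) then show ?case by (intro exI[of _ "\<lambda>x. 0"]) (auto intro: Alg.const)
next
  case (add f g)
  then obtain f' g' where d1: "\<forall>x. (f has_real_derivative f' x) (at x)" and a1: "f' \<in> Alg B"
     and d2: "\<forall>x. (g has_real_derivative g' x) (at x)" and a2: "g' \<in> Alg B" by blast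
  have "\<forall>x. ((\<lambda>x. f x + g x) has_real_derivative (\<lambda>x. f' x + g' x) x) (at x)"
    using DERIV_add[OF d1[rule_format] d2[rule_format]] by simp
  moreover have "(\<lambda>x. f' x + g' x) \<in> Alg B"
    by (rule Alg.add) (simp_all add: a1 a2)
  ultimately show ?case by (intro exI[of _ "\<lambda>x. f' x + g' x"]) simp
next
  case (mult f g)
  then obtain f' g' where d1: "\<forall>x. (f has_real_derivative f' x) (at x)" and a1: "f' \<in> Alg B"
     and d2: "\<forall>x. (g has_real_derivative g' x) (at x)" and a2: "g' \<in> Alg B" by blast
  have "\<forall>x. ((\<lambda>x. f x * g x) has_real_derivative (\<lambda>x. f' x * g x + f x * g' x) x) (at x)"
    using DERIV_mult[OF d1[rule_format] d2[rule_format]] by (simp add: mult.commute)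
  moreover have "(\<lambda>x. f' x * g x + f x * g' x) \<in> Alg B"
    by (rule Alg.add; rule Alg.mult) (simp_all add: a1 a2 mult.hyps)
  ultimately show ?case by (intro exI[of _ "\<lambda>x. f' x * g x + f x * g' x"]) simp
qed

lemma Alg_Smo:
  assumes hB: "\<And>f. f \<in> B \<Longrightarrow> \<exists>f'. (\<forall>x. (f has_real_derivative f' x) (at x)) \<and> f' \<in> Alg B"
    and h: "h \<in> Alg B"
  shows "h \<in> Smo"
  using h
proof (coinduction arbitrary: h rule: Smo.coinduct)
  case (Smo h)
  then obtain h' where d: "\<forall>x. (h has_real_derivative h' x) (at x)" and "h' \<in> Alg B"
    using Alg_derivs[OF hB] by blast
  moreover have "deriv h = h'" using d by (auto intro!: ext DERIV_imp_deriv)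
  moreover have "\<forall>x. h differentiable (at x)" using d real_differentiable_def by blast
  ultimately show ?case by simp
qed

lemma Alg_sum: "finite I \<Longrightarrow> (\<And>i. i \<in> I \<Longrightarrow> f i \<in> Alg B) \<Longrightarrow> (\<lambda>x. \<Sum>i\<in>I. f i x) \<in> Alg B"
proof (induction I rule: finite_induct)
  case empty then show ?case using Alg.const[of 0 B] by simp
next
  case (insert i I)
  then show ?case using Alg.add[of "f i" B "\<lambda>x. \<Sum>i\<in>I. f i x"] by simp
qed

definition Rf :: "real \<Rightarrow> real" where
  "Rf y = 1 / (Ef 1 y + Ef 1 (1 - y))"

definition Hf :: "real \<Rightarrow> real" where
  "Hf y = Ef 1 y * Rf y"

lemma Ef1_nonneg: "Ef 1 y \<ge> 0" by (simp add: Ef_def)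
lemma Ef1_pos: "y > 0 \<Longrightarrow> Ef 1 y > 0" by (simp add: Ef_def)

lemma den_pos: "Ef 1 y + Ef 1 (1 - y) > 0"
  using Ef1_nonneg[of y] Ef1_nonneg[of "1-y"] Ef1_pos[of y] Ef1_pos[of "1-y"]
  by (cases "y > 0") auto

lemma Hf_0: "y \<le> 0 \<Longrightarrow> Hf y = 0" by (simp add: Hf_def Ef_nonpos)
lemma Hf_1: "y \<ge> 1 \<Longrightarrow> Hf y = 1"
  using Ef1_pos[of y] by (simp add: Hf_def Rf_def Ef_nonpos)
lemma Hf_ge: "Hf y \<ge> 0"
  using den_pos[of y] Ef1_nonneg[of y] by (simp add: Hf_def Rf_def)
lemma Hf_le: "Hf y \<le> 1"
  using den_pos[of y] Ef1_nonneg[of y] Ef1_nonneg[of "1-y"] by (simp add: Hf_def Rf_def divide_simps)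

definition B0 :: "(real \<Rightarrow> real) set" where
  "B0 = {(\<lambda>x. Ef q (a*x+b)) | q a b. True} \<union> {(\<lambda>x. Rf (a*x+b)) | a b. True}"

lemma Rf_deriv: "(Rf has_real_derivative
   (- (Ef (Tp 1) y - Ef (Tp 1) (1 - y)) * Rf y * Rf y)) (at y)"
proof -
  have "((\<lambda>y. 1 / (Ef 1 y + Ef 1 (1 - y))) has_real_derivative
     - ((Ef (Tp 1) y + Ef (Tp 1) (1 - y) * (0 - 1))) / (Ef 1 y + Ef 1 (1 - y))^2) (at y)"
    using den_pos[of y]
    by (auto intro!: derivative_eq_intros DERIV_chain2[OF Ef_deriv] Ef_deriv simp: power2_eq_square)
  then show ?thesis unfolding Rf_def[abs_def] by (simp add: power2_eq_square field_simps)
qed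

lemma B0_deriv: "f \<in> B0 \<Longrightarrow> \<exists>f'. (\<forall>x. (f has_real_derivative f' x) (at x)) \<and> f' \<in> Alg B0"
proof -
  assume "f \<in> B0"
  then consider (E) q a b where "f = (\<lambda>x. Ef q (a*x+b))" | (R) a b where "f = (\<lambda>x. Rf (a*x+b))"
    unfolding B0_def by blast
  then show ?thesis
  proof cases
  case (E q a b)
  note f = E
  have "\<forall>x. (f has_real_derivative (\<lambda>x. a * Ef (Tp q) (a*x+b)) x) (at x)"
  proof
    fix x
    have "((\<lambda>x. a*x+b) has_real_derivative a) (at x)" by (auto intro!: derivative_eq_intros)
    from DERIV_chain2[OF Ef_deriv this] show "(f has_real_derivative (\<lambda>x. a * Ef (Tp q) (a*x+b)) x) (at x)"
      unfolding f by (simp add: mult.commute)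
  qed
  moreover have "(\<lambda>x. a * Ef (Tp q) (a*x+b)) \<in> Alg B0"
    by (intro Alg.mult Alg.const Alg.base) (auto simp: B0_def)
  ultimately show ?thesis by (intro exI[of _ "\<lambda>x. a * Ef (Tp q) (a*x+b)"] conjI)
next
  case (R a b)
  note f = R
  let ?g = "\<lambda>x. (- a) * (Ef (Tp 1) (a*x+b) + (-1) * Ef (Tp 1) ((-a)*x+(1-b))) * Rf (a*x+b) * Rf (a*x+b)"
  have "\<forall>x. (f has_real_derivative ?g x) (at x)"
  proof
    fix x
    have "((\<lambda>x. a*x+b) has_real_derivative a) (at x)" by (auto intro!: derivative_eq_intros)
    from DERIV_chain2[OF Rf_deriv this] show "(f has_real_derivative ?g x) (at x)"
      unfolding f by (simp add: algebra_simps)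
  qed
  moreover have "?g \<in> Alg B0"
  proof -
    have E1: "(\<lambda>x. Ef (Tp 1) (a*x+b)) \<in> Alg B0" by (rule Alg.base) (auto simp: B0_def)
    have E2: "(\<lambda>x. Ef (Tp 1) ((-a)*x+(1-b))) \<in> Alg B0"
      by (rule Alg.base) (unfold B0_def, rule UnI1, blast)
    have R: "(\<lambda>x. Rf (a*x+b)) \<in> Alg B0" by (rule Alg.base) (auto simp: B0_def)
    show ?thesis
      using Alg.mult[OF Alg.mult[OF Alg.mult[OF Alg.const[of "-a"] Alg.add[OF E1 Alg.mult[OF Alg.const[of "-1"] E2]]] R] R]
      by simp
  qed
  ultimately show ?thesis by (intro exI[of _ ?g] conjI)
qed
qed

lemma Hf_affine_Smo: "(\<lambda>x. Hf (a*x+b)) \<in> Smo"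
proof (rule Alg_Smo[OF B0_deriv])
  show "(\<lambda>x. Hf (a*x+b)) \<in> Alg B0"
    unfolding Hf_def by (intro Alg.mult Alg.base) (auto simp: B0_def)
qed

lemma Hf_Alg: "(\<lambda>x. Hf (a*x+b)) \<in> Alg B0"
  unfolding Hf_def by (intro Alg.mult Alg.base) (auto simp: B0_def)

lemma sum_Smo:
  assumes "finite I"
  shows "(\<lambda>x. \<Sum>i\<in>I. c i * Hf (a i * x + b i)) \<in> Smo"
proof (rule Alg_Smo[OF B0_deriv])
  show "(\<lambda>x. \<Sum>i\<in>I. c i * Hf (a i * x + b i)) \<in> Alg B0"
    using assms by (intro Alg_sum Alg.mult[OF Alg.const Hf_Alg])
qed




lemma phi_fin:
  fixes r \<delta> p :: real
  assumes r: "r > 0" and p: "p > 0"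
  shows "(\<integral>\<^sup>+t. indicator {t. r \<le> \<bar>t\<bar>} t * ennreal (\<delta> powr p / \<bar>t\<bar> powr (1+p)) \<partial>lborel) < \<infinity>"
proof -
  define fF where "fF t = \<delta> powr p / t powr (1+p)" for t :: real
  define F where "F t = -(\<delta> powr p / p) * t powr (-p)" for t :: real
  have fF_meas[measurable]: "fF \<in> borel_measurable borel" unfolding fF_def by measurable
  have I1: "(\<integral>\<^sup>+t. ennreal (fF t) * indicator {r..} t \<partial>lborel) = ennreal (0 - F r)"
  proof (rule nn_integral_FTC_atLeast)
    show "fF \<in> borel_measurable borel" by simp
    fix t assume t: "r \<le> t"
    then have tp: "t > 0" using r by simp
    have "((\<lambda>t. -(\<delta> powr p / p) * t powr (-p)) has_real_derivative
            -(\<delta> powr p / p) * ((-p) * t powr (-p - 1))) (at t)"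
      by (rule DERIV_cmult[OF has_real_derivative_powr[OF tp]])
    moreover have "-(\<delta> powr p / p) * ((-p) * t powr (-p - 1)) = fF t"
    proof -
      have e: "(-p - 1) = -(1+p)" by simp
      have "t powr (-p - 1) = inverse (t powr (1+p))"
        unfolding e by (rule powr_minus)
      then show ?thesis using p by (simp add: fF_def divide_inverse)
    qed
    ultimately show "(F has_real_derivative fF t) (at t)" unfolding F_def[abs_def] by simp
    show "0 \<le> fF t" by (simp add: fF_def)
  next
    have "((\<lambda>t. t powr (-p)) \<longlongrightarrow> 0) at_top"
      using p by (intro tendsto_neg_powr filterlim_ident) auto
    then have "((\<lambda>t. -(\<delta> powr p / p) * t powr (-p)) \<longlongrightarrow> -(\<delta> powr p / p) * 0) at_top"
      by (intro tendsto_mult tendsto_const)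
    then show "(F \<longlongrightarrow> 0) at_top" unfolding F_def[abs_def] by simp
  qed
  have I2: "(\<integral>\<^sup>+t. ennreal (fF (-t)) * indicator {..-r} t \<partial>lborel) = ennreal (0 - F r)"
  proof -
    have ind: "\<And>t. (indicator {r..} (-t) :: ennreal) = indicator {..-r} t" by (auto simp: indicator_def)
    have "(\<integral>\<^sup>+t. ennreal (fF t) * indicator {r..} t \<partial>lborel) = (\<integral>\<^sup>+t. ennreal (fF (-t)) * indicator {..-r} t \<partial>lborel)"
      using nn_integral_real_affine[of "\<lambda>t. ennreal (fF t) * indicator {r..} t" "-1" 0] by (simp add: ind)
    then show ?thesis using I1 by simp
  qed
  have "(\<integral>\<^sup>+t. indicator {t. r \<le> \<bar>t\<bar>} t * ennreal (\<delta> powr p / \<bar>t\<bar> powr (1+p)) \<partial>lborel)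
      \<le> (\<integral>\<^sup>+t. ennreal (fF t) * indicator {r..} t + ennreal (fF (-t)) * indicator {..-r} t \<partial>lborel)"
  proof (rule nn_integral_mono)
    fix t :: real
    show "indicator {t. r \<le> \<bar>t\<bar>} t * ennreal (\<delta> powr p / \<bar>t\<bar> powr (1+p))
        \<le> ennreal (fF t) * indicator {r..} t + ennreal (fF (-t)) * indicator {..-r} t"
      using r by (cases "t \<ge> r"; cases "t \<le> -r") (auto simp: indicator_def fF_def)
  qed
  also have "\<dots> = (\<integral>\<^sup>+t. ennreal (fF t) * indicator {r..} t \<partial>lborel) + (\<integral>\<^sup>+t. ennreal (fF (-t)) * indicator {..-r} t \<partial>lborel)"
    by (rule nn_integral_add) auto
  also have "\<dots> < \<infinity>" using I1 I2 by simp
  finally show ?thesis .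
qed

lemma G_fin:
  fixes r \<delta> p a b :: real
  assumes r: "r > 0" and p: "p > 0" and ab: "a \<le> b"
  shows "(\<integral>\<^sup>+z. indicator {z. (fst z \<in> {a..b} \<or> snd z \<in> {a..b}) \<and> r \<le> \<bar>snd z - fst z\<bar>} z
           * ennreal (\<delta> powr p / \<bar>snd z - fst z\<bar> powr (1+p)) \<partial>(lborel \<Otimes>\<^sub>M lborel)) < \<infinity>"
proof -
  define \<phi> where "\<phi> t = indicator {t. r \<le> \<bar>t\<bar>} t * ennreal (\<delta> powr p / \<bar>t\<bar> powr (1+p))" for t :: real
  define I where "I = (\<integral>\<^sup>+t. \<phi> t \<partial>lborel)"
  have I: "I < \<infinity>" unfolding I_def \<phi>_def using phi_fin[OF r p] .
  have phim[measurable]: "\<phi> \<in> borel_measurable borel" unfolding \<phi>_def by measurable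
  have shift1: "(\<integral>\<^sup>+y. \<phi> (y - x) \<partial>lborel) = I" for x
    unfolding I_def by (subst nn_integral_real_affine[of _ 1 "-x"]) auto
  have shift2: "(\<integral>\<^sup>+x. \<phi> (y - x) \<partial>lborel) = I" for y
    unfolding I_def by (subst nn_integral_real_affine[of _ "-1" y]) auto
  have "(\<integral>\<^sup>+z. indicator {z. (fst z \<in> {a..b} \<or> snd z \<in> {a..b}) \<and> r \<le> \<bar>snd z - fst z\<bar>} z
           * ennreal (\<delta> powr p / \<bar>snd z - fst z\<bar> powr (1+p)) \<partial>(lborel \<Otimes>\<^sub>M lborel))
      \<le> (\<integral>\<^sup>+z. indicator {a..b} (fst z) * \<phi> (snd z - fst z) + indicator {a..b} (snd z) * \<phi> (snd z - fst z) \<partial>(lborel \<Otimes>\<^sub>M lborel))"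
    by (rule nn_integral_mono) (auto simp: indicator_def \<phi>_def)
  also have "\<dots> = (\<integral>\<^sup>+z. indicator {a..b} (fst z) * \<phi> (snd z - fst z) \<partial>(lborel \<Otimes>\<^sub>M lborel))
      + (\<integral>\<^sup>+z. indicator {a..b} (snd z) * \<phi> (snd z - fst z) \<partial>(lborel \<Otimes>\<^sub>M lborel))"
    by (rule nn_integral_add) auto
  also have "(\<integral>\<^sup>+z. indicator {a..b} (fst z) * \<phi> (snd z - fst z) \<partial>(lborel \<Otimes>\<^sub>M lborel))
      = (\<integral>\<^sup>+x. \<integral>\<^sup>+y. indicator {a..b} x * \<phi> (y - x) \<partial>lborel \<partial>lborel)"
    by (subst lborel.nn_integral_fst[symmetric]) auto
  also have "\<dots> = (\<integral>\<^sup>+x. indicator {a..b} x * I \<partial>lborel)"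
    by (intro nn_integral_cong) (simp add: nn_integral_cmult shift1)
  also have "(\<integral>\<^sup>+z. indicator {a..b} (snd z) * \<phi> (snd z - fst z) \<partial>(lborel \<Otimes>\<^sub>M lborel))
      = (\<integral>\<^sup>+y. \<integral>\<^sup>+x. indicator {a..b} y * \<phi> (y - x) \<partial>lborel \<partial>lborel)"
    by (subst lborel_pair.nn_integral_snd[symmetric]) auto
  also have "\<dots> = (\<integral>\<^sup>+y. indicator {a..b} y * I \<partial>lborel)"
    by (intro nn_integral_cong) (simp add: nn_integral_cmult shift2)
  also have "(\<integral>\<^sup>+x. indicator {a..b} x * I \<partial>lborel) + (\<integral>\<^sup>+y. indicator {a..b} y * I \<partial>lborel) < \<infinity>"
    using I ab by (simp add: nn_integral_multc ennreal_mult_less_top)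
  finally show ?thesis .
qed


locale stp =
  fixes \<delta> p :: real and n :: nat and xs :: "nat \<Rightarrow> real" and k :: "nat \<Rightarrow> int"
  assumes dpos: "\<delta> > 0" and p1: "p \<ge> 1" and n1: "n \<ge> 1"
    and inc: "\<forall>i<n. xs i < xs (Suc i)"
    and kb1: "\<bar>k 1\<bar> = 1" and kbn: "\<bar>k n\<bar> = 1"
    and kst: "\<forall>i\<in>{2..n}. \<bar>k i - k (i - 1)\<bar> = 1"
begin

definition K :: "nat \<Rightarrow> real" where "K i = (if 1 \<le> i \<and> i \<le> n then real_of_int (k i) else 0)"
definition c :: "nat \<Rightarrow> real" where "c i = \<delta> * (K (Suc i) - K i)"
definition ue :: "real \<Rightarrow> real \<Rightarrow> real" where "ue \<epsilon> x = (\<Sum>i\<le>n. c i * Hf ((x - xs i) / \<epsilon>))"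
definition v :: "real \<Rightarrow> real" where "v x = (\<Sum>i\<le>n. c i * (if xs i < x then 1 else 0))"
definition X :: "real set" where "X = xs ` {..n}"

lemma xs_less: "i < j \<Longrightarrow> j \<le> n \<Longrightarrow> xs i < xs j"
proof (induction j)
  case 0 then show ?case by simp
next
  case (Suc j)
  then show ?case using inc by (cases "i = j") (auto, meson Suc_le_lessD less_Suc_eq order_less_trans)
qed

lemma xs_le: "i \<le> j \<Longrightarrow> j \<le> n \<Longrightarrow> xs i \<le> xs j"
  using xs_less[of i j] by (cases "i = j") auto

lemma c_abs: "i \<le> n \<Longrightarrow> \<bar>c i\<bar> = \<delta>"
proof -
  assume i: "i \<le> n"
  have "\<bar>K (Suc i) - K i\<bar> = 1"
  proof (cases "i = 0")
    case True then show ?thesis using kb1 n1 by (simp add: K_def)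
  next
    case False
    show ?thesis
    proof (cases "i = n")
      case True then show ?thesis using kbn n1 False by (simp add: K_def)
    next
      case False2: False
      have "Suc i \<in> {2..n}" using i False False2 by auto
      then have "\<bar>k (Suc i) - k i\<bar> = 1" using kst by fastforce
      then have "\<bar>real_of_int (k (Suc i)) - real_of_int (k i)\<bar> = 1"
        by (metis of_int_abs of_int_diff of_int_1)
      then show ?thesis using i False False2 by (simp add: K_def)
    qed
  qed
  then show ?thesis using dpos by (simp add: c_def abs_mult)
qed

lemma sum_c: "(\<Sum>i\<le>n. c i) = 0"
proof -
  have "(\<Sum>i\<le>n. c i) = \<delta> * (\<Sum>i<Suc n. K (Suc i) - K i)"
    by (simp add: c_def sum_distrib_left lessThan_Suc_atMost)
  also have "\<dots> = \<delta> * (K (Suc n) - K 0)" by (simp only: sum_lessThan_telescope)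
  also have "\<dots> = 0" by (simp add: K_def)
  finally show ?thesis .
qed

lemma v_region:
  assumes j: "j \<le> Suc n" and h: "\<forall>i\<le>n. xs i < x \<longleftrightarrow> i < j"
  shows "v x = \<delta> * K j"
proof -
  have "v x = (\<Sum>i\<in>{i\<in>{..n}. xs i < x}. c i)"
    unfolding v_def by (simp add: sum.inter_filter[symmetric] if_distrib cong: if_cong)
  also have "{i\<in>{..n}. xs i < x} = {..<j}" using h j by auto
  also have "(\<Sum>i<j. c i) = \<delta> * (K j - K 0)"
    by (simp add: c_def sum_distrib_left[symmetric] sum_lessThan_telescope)
  finally show ?thesis by (simp add: K_def)
qed

lemma v_outside: "x < xs 0 \<or> x > xs n \<Longrightarrow> v x = 0"
proof -
  assume "x < xs 0 \<or> x > xs n"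
  then show ?thesis
  proof
    assume "x < xs 0"
    then have "\<forall>i\<le>n. xs i < x \<longleftrightarrow> i < 0" using xs_le[of 0] by force
    then show ?thesis using v_region[of 0 x] by (simp add: K_def)
  next
    assume "x > xs n"
    then have "\<forall>i\<le>n. xs i < x \<longleftrightarrow> i < Suc n" using xs_le by force
    then show ?thesis using v_region[of "Suc n" x] by (simp add: K_def)
  qed
qed

lemma u_eq_v:
  assumes u0: "\<forall>x. (x < xs 0 \<or> x > xs n) \<longrightarrow> u x = 0"
    and ui: "\<forall>i\<in>{1..n}. \<forall>x. xs (i - 1) < x \<and> x < xs i \<longrightarrow> u x = real_of_int (k i) * \<delta>"
    and x: "x \<notin> X"
  shows "u x = v x"
proof (cases "x < xs 0 \<or> x > xs n")
  case True then show ?thesis using u0 v_outside[OF True] by auto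
next
  case False
  have xn: "x \<noteq> xs i" if "i \<le> n" for i using x that by (auto simp: X_def)
  have "x < xs n" using False xn[of n] by auto
  define j where "j = (LEAST j. x < xs j)"
  have j1: "x < xs j" unfolding j_def by (rule LeastI[of _ n]) fact
  have j2: "j \<le> n" unfolding j_def by (rule Least_le) fact
  have j3: "\<not> x < xs i" if "i < j" for i using not_less_Least[of i "\<lambda>j. x < xs j"] that j_def by simp
  have "j \<noteq> 0"
  proof
    assume "j = 0" with j1 False show False by simp
  qed
  then have "xs (j - 1) < x" using j3[of "j-1"] xn[of "j-1"] j2 by fastforce
  then have "u x = real_of_int (k j) * \<delta>" using ui j1 j2 \<open>j \<noteq> 0\<close> by auto
  moreover have "\<forall>i\<le>n. xs i < x \<longleftrightarrow> i < j"
  proof (intro allI impI)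
    fix i assume "i \<le> n"
    show "xs i < x \<longleftrightarrow> i < j"
    proof
      assume "xs i < x" then show "i < j" using j1 xs_le[of j i] \<open>i \<le> n\<close> by (cases "i < j") auto
    next
      assume "i < j" then show "xs i < x" using j3[of i] xn[of i] \<open>i \<le> n\<close> by auto
    qed
  qed
  then have "v x = \<delta> * K j" using v_region[of j x] j2 by simp
  ultimately show ?thesis using j2 \<open>j \<noteq> 0\<close> by (simp add: K_def)
qed

lemma ue_eq_v:
  assumes e: "\<epsilon> > 0" and x: "x \<notin> X" and h: "\<forall>i\<le>n. xs i < x \<longrightarrow> \<epsilon> \<le> x - xs i"
  shows "ue \<epsilon> x = v x"
  unfolding ue_def v_def
proof (rule sum.cong[OF refl])
  fix i assume i: "i \<in> {..n}"
  have "x \<noteq> xs i" using x i by (auto simp: X_def)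
  show "c i * Hf ((x - xs i) / \<epsilon>) = c i * (if xs i < x then 1 else 0)"
  proof (cases "xs i < x")
    case True
    then have "1 \<le> (x - xs i) / \<epsilon>" using h i e by (auto simp: field_simps)
    then show ?thesis using True Hf_1 by simp
  next
    case False
    then have "(x - xs i) / \<epsilon> \<le> 0" using e by (auto simp: divide_nonpos_pos)
    then show ?thesis using False Hf_0 by simp
  qed
qed

lemma ue_left: "\<epsilon> > 0 \<Longrightarrow> x \<le> xs 0 \<Longrightarrow> ue \<epsilon> x = 0"
  unfolding ue_def
proof (rule sum.neutral, rule ballI)
  fix i assume e: "\<epsilon> > 0" and x: "x \<le> xs 0" and i: "i \<in> {..n}"
  then have "x - xs i \<le> 0" using xs_le[of 0 i] by auto
  then have "(x - xs i) / \<epsilon> \<le> 0" using e by (simp add: divide_nonpos_pos)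
  then show "c i * Hf ((x - xs i) / \<epsilon>) = 0" using Hf_0 by simp
qed

lemma ue_right: "\<epsilon> > 0 \<Longrightarrow> x \<ge> xs n + \<epsilon> \<Longrightarrow> ue \<epsilon> x = 0"
proof -
  assume e: "\<epsilon> > 0" and x: "x \<ge> xs n + \<epsilon>"
  have "ue \<epsilon> x = (\<Sum>i\<le>n. c i)"
    unfolding ue_def
  proof (rule sum.cong[OF refl])
    fix i assume "i \<in> {..n}"
    then have "xs i \<le> xs n" using xs_le by auto
    then have "1 \<le> (x - xs i) / \<epsilon>" using x e by (auto simp: field_simps)
    then show "c i * Hf ((x - xs i) / \<epsilon>) = c i" using Hf_1 by simp
  qed
  then show ?thesis using sum_c by simp
qed

lemma ue_bound: "\<bar>ue \<epsilon> x\<bar> \<le> real (Suc n) * \<delta>"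
proof -
  have "\<bar>ue \<epsilon> x\<bar> \<le> (\<Sum>i\<le>n. \<bar>c i * Hf ((x - xs i) / \<epsilon>)\<bar>)" unfolding ue_def by (rule sum_abs)
  also have "\<dots> \<le> (\<Sum>i\<le>n. \<delta>)"
  proof (rule sum_mono)
    fix i assume "i \<in> {..n}"
    then have "\<bar>c i\<bar> = \<delta>" using c_abs by auto
    moreover have "\<bar>Hf ((x - xs i) / \<epsilon>)\<bar> \<le> 1" using Hf_ge Hf_le by (simp add: abs_le_iff)
    ultimately show "\<bar>c i * Hf ((x - xs i) / \<epsilon>)\<bar> \<le> \<delta>"
      using dpos by (simp add: abs_mult mult_left_le)
  qed
  finally show ?thesis by simp
qed

lemma v_bound: "\<bar>v x\<bar> \<le> real (Suc n) * \<delta>"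
proof -
  have "\<bar>v x\<bar> \<le> (\<Sum>i\<le>n. \<bar>c i * (if xs i < x then 1 else 0)\<bar>)" unfolding v_def by (rule sum_abs)
  also have "\<dots> \<le> (\<Sum>i\<le>n. \<delta>)"
  proof (rule sum_mono)
    fix i assume "i \<in> {..n}"
    then have "\<bar>c i\<bar> = \<delta>" using c_abs by auto
    then show "\<bar>c i * (if xs i < x then 1 else 0)\<bar> \<le> \<delta>" using dpos by auto
  qed
  finally show ?thesis by simp
qed

lemma ue_smooth: "\<epsilon> > 0 \<Longrightarrow> Cc_inf (ue \<epsilon>)"
proof -
  assume e: "\<epsilon> > 0"
  have eq: "ue \<epsilon> = (\<lambda>x. \<Sum>i\<in>{..n}. c i * Hf ((1/\<epsilon>) * x + (- xs i / \<epsilon>)))"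
    unfolding ue_def by (intro ext sum.cong refl) (simp add: diff_divide_distrib)
  have "smooth_real (ue \<epsilon>)" unfolding eq by (rule Smo_smooth[OF sum_Smo]) simp
  moreover have "{x. ue \<epsilon> x \<noteq> 0} \<subseteq> {xs 0 .. xs n + \<epsilon>}"
  proof (rule subsetI)
    fix x assume "x \<in> {x. ue \<epsilon> x \<noteq> 0}"
    then show "x \<in> {xs 0 .. xs n + \<epsilon>}" using ue_left[OF e, of x] ue_right[OF e, of x] by fastforce
  qed
  then have "bounded {x. ue \<epsilon> x \<noteq> 0}" by (rule bounded_subset[OF bounded_closed_interval])
  ultimately show ?thesis unfolding Cc_inf_def by (simp add: compact_closure)
qed

definition g :: real where "g = Min ((\<lambda>i. xs (Suc i) - xs i) ` {..<n})"

lemma g_pos: "g > 0"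
  unfolding g_def using n1 inc by (subst Min_gr_iff) (auto simp: lessThan_empty_iff)

lemma gap: "i < j \<Longrightarrow> j \<le> n \<Longrightarrow> xs j - xs i \<ge> g"
proof -
  assume ij: "i < j" "j \<le> n"
  have "g \<le> xs (Suc i) - xs i" unfolding g_def using ij by (intro Min_le) auto
  moreover have "xs (Suc i) \<le> xs j" using ij by (intro xs_le) auto
  ultimately show ?thesis by simp
qed

lemma Hf_diff: "\<bar>Hf a - Hf b\<bar> \<le> 1"
  using Hf_ge[of a] Hf_le[of a] Hf_ge[of b] Hf_le[of b] by (simp add: abs_le_iff)

lemma ue_close:
  assumes e: "\<epsilon> > 0" "\<epsilon> < g / 2" and xy: "\<bar>y - x\<bar> < g / 2"
  shows "\<bar>ue \<epsilon> y - ue \<epsilon> x\<bar> \<le> \<delta>"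
proof -
  define T where "T i = c i * (Hf ((y - xs i) / \<epsilon>) - Hf ((x - xs i) / \<epsilon>))" for i
  have sumT: "ue \<epsilon> y - ue \<epsilon> x = (\<Sum>i\<le>n. T i)"
    unfolding ue_def T_def by (simp add: sum_subtractf[symmetric] algebra_simps)
  have nz: "max x y > xs i \<and> min x y < xs i + \<epsilon>" if "T i \<noteq> 0" for i
  proof (rule ccontr)
    assume "\<not> (max x y > xs i \<and> min x y < xs i + \<epsilon>)"
    then consider "max x y \<le> xs i" | "min x y \<ge> xs i + \<epsilon>" by linarith
    then have "T i = 0"
    proof cases
      case 1
      then have "(y - xs i) / \<epsilon> \<le> 0" "(x - xs i) / \<epsilon> \<le> 0" using e
        by (auto simp: divide_nonpos_pos)
      then show ?thesis by (simp add: T_def Hf_0)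
    next
      case 2
      then have "(y - xs i) / \<epsilon> \<ge> 1" "(x - xs i) / \<epsilon> \<ge> 1" using e
        by (auto simp: field_simps)
      then show ?thesis by (simp add: T_def Hf_1)
    qed
    with that show False by simp
  qed
  have uniq: "i = j" if "i \<le> n" "j \<le> n" "T i \<noteq> 0" "T j \<noteq> 0" for i j
  proof (rule ccontr)
    assume "i \<noteq> j"
    then consider "i < j" | "j < i" by linarith
    then show False
    proof cases
      case 1
      have "xs j - xs i \<ge> g" using gap[OF 1 that(2)] .
      then show False using nz[OF that(3)] nz[OF that(4)] e xy by (auto simp: abs_if split: if_splits)
    next
      case 2
      have "xs i - xs j \<ge> g" using gap[OF 2 that(1)] .
      then show False using nz[OF that(3)] nz[OF that(4)] e xy by (auto simp: abs_if split: if_splits)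
    qed
  qed
  show ?thesis
  proof (cases "\<exists>i\<le>n. T i \<noteq> 0")
    case False
    then have "(\<Sum>i\<le>n. T i) = 0" by (intro sum.neutral) auto
    then show ?thesis using sumT dpos by simp
  next
    case True
    then obtain i0 where i0: "i0 \<le> n" "T i0 \<noteq> 0" by blast
    have "(\<Sum>i\<le>n. T i) = T i0 + (\<Sum>i\<in>{..n} - {i0}. T i)"
      using i0 by (subst sum.remove[of _ i0]) auto
    also have "(\<Sum>i\<in>{..n} - {i0}. T i) = 0"
      using uniq i0 by (intro sum.neutral) auto
    finally have "ue \<epsilon> y - ue \<epsilon> x = T i0" using sumT by simp
    moreover have "\<bar>T i0\<bar> \<le> \<delta> * 1"
      unfolding T_def abs_mult using c_abs[OF i0(1)] Hf_diff dpos
      by (intro mult_mono) auto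
    ultimately show ?thesis by simp
  qed
qed

lemma ue_eventually:
  assumes x: "x \<notin> X" and S: "S \<longlonglongrightarrow> 0" and Sp: "\<And>j. S j > 0"
  shows "eventually (\<lambda>j. ue (S j) x = v x) sequentially"
proof -
  define m where "m = Min ((\<lambda>i. \<bar>x - xs i\<bar>) ` {..n})"
  have "m > 0" unfolding m_def using x by (subst Min_gr_iff) (auto simp: X_def)
  then have "eventually (\<lambda>j. S j < m) sequentially" using order_tendstoD(2)[OF S] by simp
  then show ?thesis
  proof (rule eventually_mono)
    fix j assume Sm: "S j < m"
    show "ue (S j) x = v x"
    proof (rule ue_eq_v[OF Sp x], intro allI impI)
      fix i assume i: "i \<le> n" and "xs i < x"
      have "m \<le> \<bar>x - xs i\<bar>" unfolding m_def using i by (intro Min_le) auto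
      then show "S j \<le> x - xs i" using Sm \<open>xs i < x\<close> by simp
    qed
  qed
qed

lemma Hf_cont: "continuous_on UNIV Hf"
proof -
  have "(\<lambda>x. Hf (1*x+0)) \<in> Smo" by (rule Hf_affine_Smo)
  then have "\<forall>x. Hf differentiable (at x)" by (auto elim: Smo.cases)
  then show ?thesis by (simp add: continuous_at_imp_continuous_on differentiable_imp_continuous_within)
qed

lemma Hf_meas[measurable]: "Hf \<in> borel_measurable borel"
  by (rule borel_measurable_continuous_onI[OF Hf_cont])

lemma ue_meas[measurable]: "ue \<epsilon> \<in> borel_measurable borel"
  unfolding ue_def by measurable

lemma v_meas[measurable]: "v \<in> borel_measurable borel"
  unfolding v_def by measurable

lemma AEX: "AE x in lborel. x \<notin> X"
  using finite_imp_null_set_lborel[of X] by (intro AE_I'[where N=X]) (auto simp: X_def)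

lemma Lp_conv:
  assumes uv: "\<And>x. x \<notin> X \<Longrightarrow> u x = v x"
  shows "((\<lambda>\<epsilon>. \<integral>\<^sup>+ x. ennreal (\<bar>ue \<epsilon> x - u x\<bar> powr p) \<partial>lborel) \<longlongrightarrow> 0) (at_right 0)"
proof -
  have eq: "(\<integral>\<^sup>+ x. ennreal (\<bar>ue \<epsilon> x - u x\<bar> powr p) \<partial>lborel) = (\<integral>\<^sup>+ x. ennreal (\<bar>ue \<epsilon> x - v x\<bar> powr p) \<partial>lborel)" for \<epsilon>
    using AEX by (intro nn_integral_cong_AE) (auto elim!: eventually_mono simp: uv)
  show ?thesis unfolding eq
  proof (rule tendsto_at_right_sequentially[where b=1])
    fix S :: "nat \<Rightarrow> real" assume Sp: "\<And>j. 0 < S j" and S1: "\<And>j. S j < 1" and "decseq S" and S0: "S \<longlonglongrightarrow> 0"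
    define w where "w x = ennreal ((2 * (real (Suc n) * \<delta>)) powr p) * indicator {xs 0 .. xs n + 1} x" for x
    have "(\<lambda>j. \<integral>\<^sup>+ x. ennreal (\<bar>ue (S j) x - v x\<bar> powr p) \<partial>lborel) \<longlonglongrightarrow> (\<integral>\<^sup>+ (x::real). 0 \<partial>lborel)"
    proof (rule nn_integral_dominated_convergence[where w=w and u'="\<lambda>x. 0" and M=lborel and u="\<lambda>j x. ennreal (\<bar>ue (S j) x - v x\<bar> powr p)"])
      show "\<And>j. (\<lambda>x. ennreal (\<bar>ue (S j) x - v x\<bar> powr p)) \<in> borel_measurable lborel" by measurable
      show "(\<lambda>x. 0) \<in> borel_measurable lborel" by simp
      show "w \<in> borel_measurable lborel" unfolding w_def by measurable
      show "AE x in lborel. ennreal (\<bar>ue (S j) x - v x\<bar> powr p) \<le> w x" for j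
      proof (rule AE_I2)
        fix x
        show "ennreal (\<bar>ue (S j) x - v x\<bar> powr p) \<le> w x"
        proof (cases "x \<in> {xs 0 .. xs n + 1}")
          case True
          have "\<bar>ue (S j) x - v x\<bar> \<le> 2 * (real (Suc n) * \<delta>)"
            using ue_bound[of "S j" x] v_bound[of x] by linarith
          then have "\<bar>ue (S j) x - v x\<bar> powr p \<le> (2 * (real (Suc n) * \<delta>)) powr p"
            using p1 by (intro powr_mono2) auto
          then show ?thesis using True by (simp add: w_def ennreal_leI)
        next
          case False
          then have "x < xs 0 \<or> x > xs n + 1" by auto
          then have "ue (S j) x = 0 \<and> v x = 0"
            using ue_left[OF Sp, of x j] ue_right[OF Sp, of "j" x] S1[of j] v_outside[of x] by auto
          then show ?thesis by simp
        qed
      qed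
      show "(\<integral>\<^sup>+ x. w x \<partial>lborel) < \<infinity>"
        unfolding w_def using xs_le[of 0 n]
        by (subst nn_integral_cmult_indicator) (auto simp: ennreal_mult_less_top)
      show "AE x in lborel. (\<lambda>j. ennreal (\<bar>ue (S j) x - v x\<bar> powr p)) \<longlonglongrightarrow> 0"
        using AEX
      proof (rule eventually_mono)
        fix x assume x: "x \<notin> X"
        have "eventually (\<lambda>j. ennreal (\<bar>ue (S j) x - v x\<bar> powr p) = 0) sequentially"
          using ue_eventually[OF x S0 Sp] by (rule eventually_mono) simp
        then show "(\<lambda>j. ennreal (\<bar>ue (S j) x - v x\<bar> powr p)) \<longlonglongrightarrow> 0"
          by (rule tendsto_eventually)
      qed
    qed
    then show "(\<lambda>j. \<integral>\<^sup>+ x. ennreal (\<bar>ue (S j) x - v x\<bar> powr p) \<partial>lborel) \<longlonglongrightarrow> 0" by simp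
  qed simp
qed

lemma ue_zero_out: "0 < \<epsilon> \<Longrightarrow> \<epsilon> < 1 \<Longrightarrow> t \<notin> {xs 0 .. xs n + 1} \<Longrightarrow> ue \<epsilon> t = 0"
  using ue_left[of \<epsilon> t] ue_right[of \<epsilon> t] by auto

lemma Lambda_conv:
  assumes uv: "\<And>x. x \<notin> X \<Longrightarrow> u x = v x"
  shows "((\<lambda>\<epsilon>. Lambda \<delta> p (ue \<epsilon>)) \<longlongrightarrow> Lambda \<delta> p u) (at_right 0)"
proof -
  have N: "X \<times> UNIV \<union> UNIV \<times> X \<in> null_sets (lborel \<Otimes>\<^sub>M lborel)"
    using finite_imp_null_set_lborel[of X]
    by (intro null_sets.Un lborel.times_in_null_sets1 lborel.times_in_null_sets2) (auto simp: X_def)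
  have AE2: "AE z in lborel \<Otimes>\<^sub>M lborel. fst z \<notin> X \<and> snd z \<notin> X"
    by (rule AE_I'[OF N]) auto
  have Luv: "Lambda \<delta> p u = Lambda \<delta> p v"
    unfolding Lambda_def
  proof (intro nn_integral_cong_AE)
    show "AE z in lborel \<Otimes>\<^sub>M lborel. indicator {z. \<bar>u (snd z) - u (fst z)\<bar> > \<delta>} z *
          ennreal (\<delta> powr p / \<bar>snd z - fst z\<bar> powr (1 + p)) =
          indicator {z. \<bar>v (snd z) - v (fst z)\<bar> > \<delta>} z * ennreal (\<delta> powr p / \<bar>snd z - fst z\<bar> powr (1 + p))"
      using AE2
    proof (rule eventually_mono)
      fix z :: "real \<times> real" assume z: "fst z \<notin> X \<and> snd z \<notin> X"
      then have "u (fst z) = v (fst z)" "u (snd z) = v (snd z)" using uv by auto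
      then show "indicator {z. \<bar>u (snd z) - u (fst z)\<bar> > \<delta>} z *
          ennreal (\<delta> powr p / \<bar>snd z - fst z\<bar> powr (1 + p)) =
          indicator {z. \<bar>v (snd z) - v (fst z)\<bar> > \<delta>} z * ennreal (\<delta> powr p / \<bar>snd z - fst z\<bar> powr (1 + p))"
        by (simp add: indicator_def)
    qed
  qed
  show ?thesis unfolding Luv
  proof (rule tendsto_at_right_sequentially[where b="min 1 (g/2)"])
    show "0 < min 1 (g/2)" using g_pos by simp
    fix S :: "nat \<Rightarrow> real" assume Sp: "\<And>j. 0 < S j" and S1: "\<And>j. S j < min 1 (g/2)" and "decseq S" and S0: "S \<longlonglongrightarrow> 0"
    define G where "G z = indicator {z. (fst z \<in> {xs 0..xs n + 1} \<or> snd z \<in> {xs 0..xs n + 1}) \<and> g/2 \<le> \<bar>snd z - fst z\<bar>} z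
           * ennreal (\<delta> powr p / \<bar>snd z - fst z\<bar> powr (1+p))" for z :: "real \<times> real"
    show "(\<lambda>j. Lambda \<delta> p (ue (S j))) \<longlonglongrightarrow> Lambda \<delta> p v"
      unfolding Lambda_def
    proof (rule nn_integral_dominated_convergence[where w=G])
      show "\<And>j. (\<lambda>z. indicator {z. \<bar>ue (S j) (snd z) - ue (S j) (fst z)\<bar> > \<delta>} z *
          ennreal (\<delta> powr p / \<bar>snd z - fst z\<bar> powr (1 + p))) \<in> borel_measurable (lborel \<Otimes>\<^sub>M lborel)"
        by measurable
      show "(\<lambda>z. indicator {z. \<bar>v (snd z) - v (fst z)\<bar> > \<delta>} z *
          ennreal (\<delta> powr p / \<bar>snd z - fst z\<bar> powr (1 + p))) \<in> borel_measurable (lborel \<Otimes>\<^sub>M lborel)"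
        by measurable
      show "G \<in> borel_measurable (lborel \<Otimes>\<^sub>M lborel)" unfolding G_def by measurable
      show "integral\<^sup>N (lborel \<Otimes>\<^sub>M lborel) G < \<infinity>"
        unfolding G_def using g_pos p1 xs_le[of 0 n] by (intro G_fin) auto
      show "AE z in lborel \<Otimes>\<^sub>M lborel. indicator {z. \<bar>ue (S j) (snd z) - ue (S j) (fst z)\<bar> > \<delta>} z *
          ennreal (\<delta> powr p / \<bar>snd z - fst z\<bar> powr (1 + p)) \<le> G z" for j
      proof (rule AE_I2)
        fix z :: "real \<times> real"
        obtain x y where z: "z = (x, y)" by (cases z)
        show "indicator {z. \<bar>ue (S j) (snd z) - ue (S j) (fst z)\<bar> > \<delta>} z *
          ennreal (\<delta> powr p / \<bar>snd z - fst z\<bar> powr (1 + p)) \<le> G z"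
        proof (cases "\<bar>ue (S j) y - ue (S j) x\<bar> > \<delta>")
          case False then show ?thesis by (simp add: z)
        next
          case True
          have Sj: "0 < S j" "S j < 1" "S j < g/2" using Sp[of j] S1[of j] by auto
          have d: "g/2 \<le> \<bar>y - x\<bar>"
          proof (rule ccontr)
            assume "\<not> g/2 \<le> \<bar>y - x\<bar>"
            then have "\<bar>ue (S j) y - ue (S j) x\<bar> \<le> \<delta>" using ue_close[OF Sj(1) Sj(3)] by simp
            with True show False by simp
          qed
          have B: "x \<in> {xs 0..xs n + 1} \<or> y \<in> {xs 0..xs n + 1}"
          proof (rule ccontr)
            assume "\<not> ?thesis"
            then have "ue (S j) x = 0" "ue (S j) y = 0" using ue_zero_out[OF Sj(1) Sj(2)] by auto
            with True dpos show False by simp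
          qed
          show ?thesis using True d B by (simp add: z G_def)
        qed
      qed
      show "AE z in lborel \<Otimes>\<^sub>M lborel. (\<lambda>j. indicator {z. \<bar>ue (S j) (snd z) - ue (S j) (fst z)\<bar> > \<delta>} z *
          ennreal (\<delta> powr p / \<bar>snd z - fst z\<bar> powr (1 + p))) \<longlonglongrightarrow>
          indicator {z. \<bar>v (snd z) - v (fst z)\<bar> > \<delta>} z * ennreal (\<delta> powr p / \<bar>snd z - fst z\<bar> powr (1 + p))"
        using AE2
      proof (rule eventually_mono)
        fix z :: "real \<times> real" assume z: "fst z \<notin> X \<and> snd z \<notin> X"
        have "eventually (\<lambda>j. ue (S j) (fst z) = v (fst z)) sequentially"
             "eventually (\<lambda>j. ue (S j) (snd z) = v (snd z)) sequentially"
          using ue_eventually[OF _ S0 Sp] z by auto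
        then have "eventually (\<lambda>j. indicator {z. \<bar>ue (S j) (snd z) - ue (S j) (fst z)\<bar> > \<delta>} z *
          ennreal (\<delta> powr p / \<bar>snd z - fst z\<bar> powr (1 + p)) =
          indicator {z. \<bar>v (snd z) - v (fst z)\<bar> > \<delta>} z * ennreal (\<delta> powr p / \<bar>snd z - fst z\<bar> powr (1 + p))) sequentially"
          by eventually_elim (simp add: indicator_def)
        then show "(\<lambda>j. indicator {z. \<bar>ue (S j) (snd z) - ue (S j) (fst z)\<bar> > \<delta>} z *
          ennreal (\<delta> powr p / \<bar>snd z - fst z\<bar> powr (1 + p))) \<longlonglongrightarrow>
          indicator {z. \<bar>v (snd z) - v (fst z)\<bar> > \<delta>} z * ennreal (\<delta> powr p / \<bar>snd z - fst z\<bar> powr (1 + p))"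
          by (rule tendsto_eventually)
      qed
    qed
  qed
qed

end

theorem proposition3p9:
  fixes \<delta> p :: real and u :: "real \<Rightarrow> real"
  assumes "\<delta> > 0" and "p \<ge> 1" and "step_fun \<delta> u"
  shows "\<exists>ue :: real \<Rightarrow> real \<Rightarrow> real.
           (\<forall>\<epsilon>>0. Cc_inf (ue \<epsilon>)) \<and>
           ((\<lambda>\<epsilon>. \<integral>\<^sup>+ x. ennreal (\<bar>ue \<epsilon> x - u x\<bar> powr p) \<partial>lborel) \<longlongrightarrow> 0) (at_right 0) \<and>
           ((\<lambda>\<epsilon>. Lambda \<delta> p (ue \<epsilon>)) \<longlongrightarrow> Lambda \<delta> p u) (at_right 0)"
proof -
  obtain n xs k where n1: "n \<ge> 1" and inc: "\<forall>i<n. xs i < xs (Suc i)"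
    and u0: "\<forall>x. (x < xs 0 \<or> x > xs n) \<longrightarrow> u x = 0"
    and ui: "\<forall>i\<in>{1..n}. \<forall>x. xs (i - 1) < x \<and> x < xs i \<longrightarrow> u x = real_of_int (k i) * \<delta>"
    and kb1: "\<bar>k 1\<bar> = 1" and kbn: "\<bar>k n\<bar> = 1"
    and kst: "\<forall>i\<in>{2..n}. \<bar>k i - k (i - 1)\<bar> = 1"
    using assms(3) unfolding step_fun_def by blast
  interpret S: stp \<delta> p n xs k
    using assms(1,2) n1 inc kb1 kbn kst by unfold_locales auto
  have uv: "\<And>x. x \<notin> S.X \<Longrightarrow> u x = S.v x"
    using S.u_eq_v[OF u0 ui] by blast
  show ?thesis
    using S.ue_smooth S.Lp_conv[OF uv] S.Lambda_conv[OF uv] by blast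
qed

end
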